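(* Let $T$ be a Sarason-Toeplitz operator on $H^2(\mathbb{T})$. Then the adjoint $T^*$ is also a Sarason-Toeplitz operator.
   Context: $H^2=H^2(\mathbb{T})$ is the Hardy space, viewed as the closed subspace of $L^2(\mathbb{T})$ spanned by $\{e^{in\theta}\}_{n\ge 0}$ (equivalently, analytic functions on the unit disc with square-summable Taylor coefficients), and $S=M_z$ is the shift operator $Sf=zf$. A Sarason-Toeplitz operator is a closed, densely defined (linear) operator $T$ on $H^2$ with domain $D(T)$ such that: (1) $D(T)$ is $S$-invariant, i.e. $zf\in D(T)$ whenever $f\in D(T)$; (2) $S^*TS=T$, i.e. $S^*T(zf)=Tf$ for all $f\in D(T)$; (3) if $f\in D(T)$ and $f(0)=0$, then $S^*f\in D(T)$. *)

theory Defs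
  imports "HOL-Analysis.Analysis"
begin

text \<open>H^2 is modelled by its (unitarily equivalent) coefficient space:
  f in H^2 is identified with its Taylor coefficient sequence (f n)_{n>=0},
  square summable. The shift S = M_z acts as the right shift of coefficients.\<close>

type_synonym h2 = "nat \<Rightarrow> complex"

definition H2 :: "h2 set" where
  "H2 = {f. summable (\<lambda>n. (cmod (f n))\<^sup>2)}"

definition h2_norm :: "h2 \<Rightarrow> real" where
  "h2_norm f = sqrt (\<Sum>n. (cmod (f n))\<^sup>2)"

definition h2_inner :: "h2 \<Rightarrow> h2 \<Rightarrow> complex" where
  "h2_inner f g = (\<Sum>n. f n * cnj (g n))"

definition shift :: "h2 \<Rightarrow> h2" where
  "shift f = (\<lambda>n. case n of 0 \<Rightarrow> 0 | Suc m \<Rightarrow> f m)"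

definition backshift :: "h2 \<Rightarrow> h2" where
  "backshift f = (\<lambda>n. f (Suc n))"

text \<open>An operator is given by its domain D and a map T (only relevant on D).\<close>
definition linear_operator :: "h2 set \<Rightarrow> (h2 \<Rightarrow> h2) \<Rightarrow> bool" where
  "linear_operator D T \<longleftrightarrow>
     D \<subseteq> H2 \<and> (\<lambda>n. 0) \<in> D \<and>
     (\<forall>f\<in>D. \<forall>g\<in>D. (\<lambda>n. f n + g n) \<in> D) \<and>
     (\<forall>c. \<forall>f\<in>D. (\<lambda>n. c * f n) \<in> D) \<and>
     (\<forall>f\<in>D. T f \<in> H2) \<and>
     (\<forall>f\<in>D. \<forall>g\<in>D. T (\<lambda>n. f n + g n) = (\<lambda>n. T f n + T g n)) \<and>
     (\<forall>c. \<forall>f\<in>D. T (\<lambda>n. c * f n) = (\<lambda>n. c * T f n))"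

definition densely_defined :: "h2 set \<Rightarrow> bool" where
  "densely_defined D \<longleftrightarrow>
     (\<forall>f\<in>H2. \<forall>e>0. \<exists>g\<in>D. h2_norm (\<lambda>n. f n - g n) < e)"

definition h2_tendsto :: "(nat \<Rightarrow> h2) \<Rightarrow> h2 \<Rightarrow> bool" where
  "h2_tendsto fs f \<longleftrightarrow> (\<lambda>k. h2_norm (\<lambda>n. fs k n - f n)) \<longlonglongrightarrow> 0"

text \<open>Closed graph (in H^2 x H^2), expressed sequentially (H^2 is a metric space).\<close>
definition closed_operator :: "h2 set \<Rightarrow> (h2 \<Rightarrow> h2) \<Rightarrow> bool" where
  "closed_operator D T \<longleftrightarrow>
     (\<forall>fs f g. (\<forall>k. fs k \<in> D) \<longrightarrow> f \<in> H2 \<longrightarrow> g \<in> H2 \<longrightarrow>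
        h2_tendsto fs f \<longrightarrow> h2_tendsto (\<lambda>k. T (fs k)) g \<longrightarrow> f \<in> D \<and> T f = g)"

definition sarason_toeplitz :: "h2 set \<Rightarrow> (h2 \<Rightarrow> h2) \<Rightarrow> bool" where
  "sarason_toeplitz D T \<longleftrightarrow>
     linear_operator D T \<and> densely_defined D \<and> closed_operator D T \<and>
     (\<forall>f\<in>D. shift f \<in> D) \<and>
     (\<forall>f\<in>D. backshift (T (shift f)) = T f) \<and>
     (\<forall>f\<in>D. f 0 = 0 \<longrightarrow> backshift f \<in> D)"

definition adj_dom :: "h2 set \<Rightarrow> (h2 \<Rightarrow> h2) \<Rightarrow> h2 set" where
  "adj_dom D T = {g\<in>H2. \<exists>h\<in>H2. \<forall>f\<in>D. h2_inner (T f) g = h2_inner f h}"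

definition adj :: "h2 set \<Rightarrow> (h2 \<Rightarrow> h2) \<Rightarrow> h2 \<Rightarrow> h2" where
  "adj D T g = (THE h. h \<in> H2 \<and> (\<forall>f\<in>D. h2_inner (T f) g = h2_inner f h))"

end

theory Submission
  imports Defs "HOL-Analysis.Analysis"
begin

lemma H2_iff: "f \<in> H2 \<longleftrightarrow> summable (\<lambda>n. (cmod (f n))\<^sup>2)"
  by (simp add: H2_def)

lemma H2_zero[simp]: "(\<lambda>n. 0) \<in> H2"
  by (simp add: H2_def)

lemma abs_prod_le: "cmod (a * cnj b) \<le> (cmod a)\<^sup>2 + (cmod b)\<^sup>2"
proof -
  have "cmod (a * cnj b) = cmod a * cmod b" by (simp add: norm_mult)
  also have "\<dots> \<le> (cmod a)\<^sup>2 + (cmod b)\<^sup>2"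
    using sum_squares_bound[of "cmod a" "cmod b"] mult_nonneg_nonneg[OF norm_ge_zero[of a] norm_ge_zero[of b]] by linarith
  finally show ?thesis .
qed

lemma summable_inner_norm:
  assumes "f \<in> H2" "g \<in> H2"
  shows "summable (\<lambda>n. cmod (f n * cnj (g n)))"
  apply (rule summable_comparison_test'[where g="\<lambda>n. (cmod (f n))\<^sup>2 + (cmod (g n))\<^sup>2"])
  using assms by (auto simp: H2_def intro!: summable_add abs_prod_le)

lemma summable_inner:
  assumes "f \<in> H2" "g \<in> H2"
  shows "summable (\<lambda>n. f n * cnj (g n))"
  using summable_norm_cancel[OF summable_inner_norm[OF assms]] .

lemma H2_add: assumes "f \<in> H2" "g \<in> H2" shows "(\<lambda>n. f n + g n) \<in> H2"
proof -
  have ineq: "(cmod (f n + g n))\<^sup>2 \<le> 2 * (cmod (f n))\<^sup>2 + 2 * (cmod (g n))\<^sup>2" for n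
  proof -
    have "cmod (f n + g n) \<le> cmod (f n) + cmod (g n)" by (rule norm_triangle_ineq)
    hence "(cmod (f n + g n))\<^sup>2 \<le> (cmod (f n) + cmod (g n))\<^sup>2"
      by (intro power_mono) auto
    also have "\<dots> \<le> 2 * (cmod (f n))\<^sup>2 + 2 * (cmod (g n))\<^sup>2"
      using sum_squares_bound[of "cmod (f n)" "cmod (g n)"] unfolding power2_sum by linarith
    finally show ?thesis .
  qed
  have S: "summable (\<lambda>n. 2 * (cmod (f n))\<^sup>2 + 2 * (cmod (g n))\<^sup>2)"
    using assms unfolding H2_def
    using summable_add[OF summable_mult[of "\<lambda>n. (cmod (f n))\<^sup>2" 2] summable_mult[of "\<lambda>n. (cmod (g n))\<^sup>2" 2]]
    by simp
  have "summable (\<lambda>n. (cmod (f n + g n))\<^sup>2)"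
    by (rule summable_comparison_test'[OF S, where N=0]) (use ineq in auto)
  thus ?thesis by (simp add: H2_def)
qed

lemma H2_scale: assumes "f \<in> H2" shows "(\<lambda>n. c * f n) \<in> H2"
  using assms summable_mult[of "\<lambda>n. (cmod (f n))\<^sup>2" "(cmod c)\<^sup>2"]
  by (simp add: H2_def norm_mult power_mult_distrib)

lemma H2_uminus: assumes "f \<in> H2" shows "(\<lambda>n. - f n) \<in> H2"
  using H2_scale[OF assms, of "-1"] by simp

lemma H2_diff: assumes "f \<in> H2" "g \<in> H2" shows "(\<lambda>n. f n - g n) \<in> H2"
  using H2_add[OF assms(1) H2_uminus[OF assms(2)]] by simp

lemma H2_shift: assumes "f \<in> H2" shows "shift f \<in> H2"
proof -
  have "(\<lambda>n. (cmod (shift f (Suc n)))\<^sup>2) = (\<lambda>n. (cmod (f n))\<^sup>2)"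
    by (simp add: shift_def)
  thus ?thesis using assms summable_Suc_iff[of "\<lambda>n. (cmod (shift f n))\<^sup>2"] unfolding H2_def
    by simp
qed

lemma H2_backshift: assumes "f \<in> H2" shows "backshift f \<in> H2"
  using assms summable_Suc_iff[of "\<lambda>n. (cmod (f n))\<^sup>2"] unfolding H2_def backshift_def
  by simp

lemma H2_e0: "(\<lambda>n. if n = 0 then c else 0) \<in> H2"
  unfolding H2_def mem_Collect_eq
  by (rule summable_finite[of "{0}"]) auto

lemma hi_add_left: "f \<in> H2 \<Longrightarrow> g \<in> H2 \<Longrightarrow> h \<in> H2 \<Longrightarrow>
  h2_inner (\<lambda>n. f n + g n) h = h2_inner f h + h2_inner g h"
  unfolding h2_inner_def
  by (simp add: distrib_right suminf_add[symmetric] summable_inner)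

lemma hi_add_right: "f \<in> H2 \<Longrightarrow> g \<in> H2 \<Longrightarrow> h \<in> H2 \<Longrightarrow>
  h2_inner h (\<lambda>n. f n + g n) = h2_inner h f + h2_inner h g"
  unfolding h2_inner_def
  by (simp add: distrib_left suminf_add[symmetric] summable_inner)

lemma hi_scale_left: "f \<in> H2 \<Longrightarrow> g \<in> H2 \<Longrightarrow>
  h2_inner (\<lambda>n. c * f n) g = c * h2_inner f g"
  unfolding h2_inner_def
  by (simp add: mult.assoc suminf_mult[symmetric] summable_inner)

lemma hi_scale_right: "f \<in> H2 \<Longrightarrow> g \<in> H2 \<Longrightarrow>
  h2_inner f (\<lambda>n. c * g n) = cnj c * h2_inner f g"
  unfolding h2_inner_def
  by (simp add: mult.left_commute suminf_mult[symmetric] summable_inner)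

lemma hi_diff_left: "f \<in> H2 \<Longrightarrow> g \<in> H2 \<Longrightarrow> h \<in> H2 \<Longrightarrow>
  h2_inner (\<lambda>n. f n - g n) h = h2_inner f h - h2_inner g h"
  unfolding h2_inner_def
  by (simp add: left_diff_distrib suminf_diff[symmetric] summable_inner)

lemma hi_diff_right: "f \<in> H2 \<Longrightarrow> g \<in> H2 \<Longrightarrow> h \<in> H2 \<Longrightarrow>
  h2_inner h (\<lambda>n. f n - g n) = h2_inner h f - h2_inner h g"
  unfolding h2_inner_def
  by (simp add: right_diff_distrib suminf_diff[symmetric] summable_inner)

lemma hi_commute: assumes f: "f \<in> H2" and g: "g \<in> H2" shows "h2_inner g f = cnj (h2_inner f g)"
proof -
  have "(\<lambda>n. cnj (f n * cnj (g n))) sums cnj (\<Sum>n. f n * cnj (g n))"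
    using sums_cnj[THEN iffD2, OF summable_sums[OF summable_inner[OF f g]]] .
  hence "(\<lambda>n. g n * cnj (f n)) sums cnj (\<Sum>n. f n * cnj (g n))"
    by (simp add: mult.commute)
  hence "(\<Sum>n. g n * cnj (f n)) = cnj (\<Sum>n. f n * cnj (g n))" by (simp add: sums_iff)
  thus ?thesis unfolding h2_inner_def .
qed

lemma hi_zero_right[simp]: "h2_inner f (\<lambda>n. 0) = 0"
  by (simp add: h2_inner_def)
lemma hi_zero_left[simp]: "h2_inner (\<lambda>n. 0) f = 0"
  by (simp add: h2_inner_def)

lemma hi_self: "f \<in> H2 \<Longrightarrow> h2_inner f f = complex_of_real ((h2_norm f)\<^sup>2)"
proof -
  assume f: "f \<in> H2"
  have "(\<lambda>n. f n * cnj (f n)) = (\<lambda>n. complex_of_real ((cmod (f n))\<^sup>2))"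
    by (simp add: fun_eq_iff complex_norm_square[symmetric])
  moreover have "(\<Sum>n. (cmod (f n))\<^sup>2) \<ge> 0" by (intro suminf_nonneg) (use f in \<open>auto simp: H2_def\<close>)
  ultimately show ?thesis using f
    by (simp add: h2_inner_def h2_norm_def H2_def suminf_of_real)
qed

lemma hi_shift_left: "f \<in> H2 \<Longrightarrow> g \<in> H2 \<Longrightarrow> h2_inner (shift f) g = h2_inner f (backshift g)"
proof -
  assume f: "f \<in> H2" and g: "g \<in> H2"
  have s: "summable (\<lambda>n. shift f n * cnj (g n))" using summable_inner[OF H2_shift[OF f] g] .
  have "h2_inner (shift f) g = (\<Sum>n. shift f (Suc n) * cnj (g (Suc n))) + shift f 0 * cnj (g 0)"
    unfolding h2_inner_def using suminf_split_head[OF s] s by (simp add: suminf_split_initial_segment)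
  thus ?thesis by (simp add: shift_def backshift_def h2_inner_def)
qed

lemma hi_shift_right: "f \<in> H2 \<Longrightarrow> g \<in> H2 \<Longrightarrow> h2_inner f (shift g) = h2_inner (backshift f) g"
proof -
  assume f: "f \<in> H2" and g: "g \<in> H2"
  have "h2_inner f (shift g) = cnj (h2_inner (shift g) f)"
    using hi_commute[OF H2_shift[OF g] f] .
  also have "\<dots> = cnj (h2_inner g (backshift f))" using hi_shift_left[OF g f] by simp
  also have "\<dots> = h2_inner (backshift f) g" using hi_commute[OF H2_backshift[OF f] g] by simp
  finally show ?thesis .
qed

lemma hi_e0_right: "f \<in> H2 \<Longrightarrow> h2_inner f (\<lambda>n. if n = 0 then c else 0) = f 0 * cnj c"
  unfolding h2_inner_def
  by (subst suminf_finite[of "{0}"]) auto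

lemma norm_sq_sum: "f \<in> H2 \<Longrightarrow> (h2_norm f)\<^sup>2 = (\<Sum>n. (cmod (f n))\<^sup>2)"
  unfolding h2_norm_def H2_def by (simp add: suminf_nonneg)

lemma norm_nonneg: "f \<in> H2 \<Longrightarrow> h2_norm f \<ge> 0" by (simp add: h2_norm_def H2_def suminf_nonneg)

lemma norm_zero_iff: "f \<in> H2 \<Longrightarrow> h2_norm f = 0 \<longleftrightarrow> f = (\<lambda>n. 0)"
proof -
  assume f: "f \<in> H2"
  have "h2_norm f = 0 \<longleftrightarrow> (\<Sum>n. (cmod (f n))\<^sup>2) = 0"
    using f by (simp add: h2_norm_def H2_def suminf_nonneg)
  also have "\<dots> \<longleftrightarrow> (\<forall>n. (cmod (f n))\<^sup>2 = 0)"
    using f by (intro suminf_eq_zero_iff) (auto simp: H2_def)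
  also have "\<dots> \<longleftrightarrow> f = (\<lambda>n. 0)" by (auto simp: fun_eq_iff)
  finally show ?thesis .
qed

typedef l2 = "H2" morphisms vec mk
  by (rule exI[of _ "\<lambda>n. 0"]) simp

setup_lifting type_definition_l2

instantiation l2 :: real_inner
begin

lift_definition zero_l2 :: l2 is "\<lambda>n. 0" by simp
lift_definition plus_l2 :: "l2 \<Rightarrow> l2 \<Rightarrow> l2" is "\<lambda>f g n. f n + g n" by (rule H2_add)
lift_definition minus_l2 :: "l2 \<Rightarrow> l2 \<Rightarrow> l2" is "\<lambda>f g n. f n - g n" by (rule H2_diff)
lift_definition uminus_l2 :: "l2 \<Rightarrow> l2" is "\<lambda>f n. - f n" by (rule H2_uminus)
lift_definition scaleR_l2 :: "real \<Rightarrow> l2 \<Rightarrow> l2" is "\<lambda>r f n. complex_of_real r * f n" by (rule H2_scale)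
definition norm_l2 :: "l2 \<Rightarrow> real" where "norm_l2 x = h2_norm (vec x)"
definition sgn_l2 :: "l2 \<Rightarrow> l2" where "sgn_l2 x = inverse (norm x) *\<^sub>R x"
definition dist_l2 :: "l2 \<Rightarrow> l2 \<Rightarrow> real" where "dist_l2 x y = norm (x - y)"
definition uniformity_l2 :: "(l2 \<times> l2) filter" where
  "uniformity_l2 = (INF e\<in>{0 <..}. principal {(x, y). dist x y < e})"
definition open_l2 :: "l2 set \<Rightarrow> bool" where
  "open_l2 U = (\<forall>x\<in>U. eventually (\<lambda>(x', y). x' = x \<longrightarrow> y \<in> U) uniformity)"
definition inner_l2 :: "l2 \<Rightarrow> l2 \<Rightarrow> real" where
  "inner_l2 x y = Re (h2_inner (vec x) (vec y))"

instance
proof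
  fix x y z :: l2 and a b :: real and U :: "l2 set"
  show "x + y + z = x + (y + z)" by transfer (simp add: add.assoc)
  show "x + y = y + x" by transfer (simp add: add.commute)
  show "0 + x = x" by transfer simp
  show "- x + x = 0" by transfer simp
  show "x - y = x + - y" by transfer simp
  show "a *\<^sub>R (x + y) = a *\<^sub>R x + a *\<^sub>R y" by transfer (simp add: distrib_left)
  show "(a + b) *\<^sub>R x = a *\<^sub>R x + b *\<^sub>R x" by transfer (simp add: distrib_right)
  show "a *\<^sub>R b *\<^sub>R x = (a * b) *\<^sub>R x" by transfer (simp add: mult.assoc)
  show "1 *\<^sub>R x = x" by transfer simp
  show "sgn x = inverse (norm x) *\<^sub>R x" by (rule sgn_l2_def)
  show "dist x y = norm (x - y)" by (rule dist_l2_def)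
  show "(uniformity :: (l2 \<times> l2) filter) = (INF e\<in>{0 <..}. principal {(x, y). dist x y < e})"
    by (rule uniformity_l2_def)
  show "open U = (\<forall>x\<in>U. \<forall>\<^sub>F (x', y) in uniformity. x' = x \<longrightarrow> y \<in> U)"
    by (rule open_l2_def)
  show "inner x y = inner y x"
    unfolding inner_l2_def using hi_commute[OF vec[of x] vec[of y]] by simp
  show "inner (x + y) z = inner x z + inner y z"
    unfolding inner_l2_def plus_l2.rep_eq using hi_add_left[OF vec[of x] vec[of y] vec[of z]] by simp
  show "inner (a *\<^sub>R x) y = a * inner x y"
    unfolding inner_l2_def scaleR_l2.rep_eq using hi_scale_left[OF vec[of x] vec[of y], of "complex_of_real a"] by simp
  show "0 \<le> inner x x"
    unfolding inner_l2_def using hi_self[OF vec[of x]] by simp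
  show "(inner x x = 0) = (x = 0)"
  proof -
    have "inner x x = (h2_norm (vec x))\<^sup>2"
      unfolding inner_l2_def using hi_self[OF vec[of x]] by simp
    also have "\<dots> = 0 \<longleftrightarrow> vec x = (\<lambda>n. 0)" using norm_zero_iff[OF vec[of x]] by simp
    also have "\<dots> \<longleftrightarrow> x = 0" using vec_inject[of x 0] by (simp add: zero_l2.rep_eq)
    finally show ?thesis .
  qed
  show "norm x = sqrt (inner x x)"
    unfolding inner_l2_def norm_l2_def using hi_self[OF vec[of x]] norm_nonneg[OF vec[of x]] by simp
qed

end

lemma norm_l2: "norm x = h2_norm (vec x)" by (simp add: norm_l2_def)
lemma inner_l2: "inner x y = Re (h2_inner (vec x) (vec y))" by (simp add: inner_l2_def)

lemma coord_le: assumes "f \<in> H2" shows "cmod (f k) \<le> h2_norm f"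
proof -
  have "(cmod (f k))\<^sup>2 = (\<Sum>n\<in>{k}. (cmod (f n))\<^sup>2)" by simp
  also have "\<dots> \<le> (\<Sum>n. (cmod (f n))\<^sup>2)"
    using assms by (intro sum_le_suminf) (auto simp: H2_def)
  also have "\<dots> = (h2_norm f)\<^sup>2" using norm_sq_sum[OF assms] by simp
  finally show ?thesis using norm_nonneg[OF assms] by (simp add: power2_le_iff_abs_le)
qed

lemma partial_le: assumes "f \<in> H2" shows "(\<Sum>n<K. (cmod (f n))\<^sup>2) \<le> (h2_norm f)\<^sup>2"
  using sum_le_suminf[of "\<lambda>n. (cmod (f n))\<^sup>2" "{..<K}"] assms norm_sq_sum[OF assms]
  by (auto simp: H2_def)

instance l2 :: complete_space
proof
  fix X :: "nat \<Rightarrow> l2"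
  assume X: "Cauchy X"
  have coordC: "Cauchy (\<lambda>m. vec (X m) k)" for k
  proof (rule CauchyI)
    fix e :: real assume "e > 0"
    then obtain M where M: "\<forall>m\<ge>M. \<forall>n\<ge>M. norm (X m - X n) < e" using CauchyD[OF X] by blast
    show "\<exists>M. \<forall>m\<ge>M. \<forall>n\<ge>M. norm (vec (X m) k - vec (X n) k) < e"
    proof (intro exI allI impI)
      fix m n assume "m \<ge> M" "n \<ge> M"
      hence "norm (X m - X n) < e" using M by blast
      moreover have "cmod (vec (X m - X n) k) \<le> norm (X m - X n)"
        unfolding norm_l2 by (rule coord_le[OF vec])
      ultimately show "norm (vec (X m) k - vec (X n) k) < e" by (simp add: minus_l2.rep_eq)
    qed
  qed
  define L where "L k = lim (\<lambda>m. vec (X m) k)" for k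
  have Lk: "(\<lambda>m. vec (X m) k) \<longlonglongrightarrow> L k" for k
    unfolding L_def using coordC[of k] by (simp add: Cauchy_convergent_iff convergent_LIMSEQ_iff)
  have main: "\<exists>M. \<forall>m\<ge>M. (\<lambda>n. vec (X m) n - L n) \<in> H2 \<and> h2_norm (\<lambda>n. vec (X m) n - L n) \<le> e"
    if e: "e > 0" for e
  proof -
    obtain M where M: "\<forall>m\<ge>M. \<forall>n\<ge>M. norm (X m - X n) < e" using CauchyD[OF X e] by blast
    have "(\<lambda>n. vec (X m) n - L n) \<in> H2 \<and> h2_norm (\<lambda>n. vec (X m) n - L n) \<le> e" if m: "m \<ge> M" for m
    proof -
      have bnd: "(\<Sum>k<K. (cmod (vec (X m) k - L k))\<^sup>2) \<le> e\<^sup>2" for K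
      proof -
        have lim: "(\<lambda>n. \<Sum>k<K. (cmod (vec (X m) k - vec (X n) k))\<^sup>2) \<longlonglongrightarrow> (\<Sum>k<K. (cmod (vec (X m) k - L k))\<^sup>2)"
          by (intro tendsto_intros Lk)
        show ?thesis
        proof (rule LIMSEQ_le_const2[OF lim], intro exI allI impI)
          fix n assume "n \<ge> M"
          hence lt: "norm (X m - X n) < e" using M m by blast
          have "(\<Sum>k<K. (cmod (vec (X m) k - vec (X n) k))\<^sup>2) \<le> (norm (X m - X n))\<^sup>2"
            unfolding norm_l2 using partial_le[OF vec[of "X m - X n"]] by (simp add: minus_l2.rep_eq)
          also have "\<dots> \<le> e\<^sup>2" using lt by (intro power_mono) auto
          finally show "(\<Sum>k<K. (cmod (vec (X m) k - vec (X n) k))\<^sup>2) \<le> e\<^sup>2" .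
        qed
      qed
      have sm: "summable (\<lambda>k. (cmod (vec (X m) k - L k))\<^sup>2)"
        by (rule summableI_nonneg_bounded[OF _ bnd]) simp
      hence inH: "(\<lambda>n. vec (X m) n - L n) \<in> H2" by (simp add: H2_def)
      have "(\<Sum>k. (cmod (vec (X m) k - L k))\<^sup>2) \<le> e\<^sup>2" by (rule suminf_le_const[OF sm bnd])
      hence "(h2_norm (\<lambda>n. vec (X m) n - L n))\<^sup>2 \<le> e\<^sup>2" using norm_sq_sum[OF inH] by simp
      hence "h2_norm (\<lambda>n. vec (X m) n - L n) \<le> e" using e by (simp add: power2_le_iff_abs_le)
      with inH show ?thesis by blast
    qed
    thus ?thesis by blast
  qed
  obtain M1 where M1: "(\<lambda>n. vec (X M1) n - L n) \<in> H2" using main[of 1] by auto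
  have LH: "L \<in> H2"
    using H2_diff[OF vec[of "X M1"] M1] by simp
  have "X \<longlonglongrightarrow> mk L"
  proof (rule LIMSEQ_I)
    fix r :: real assume r: "r > 0"
    obtain M where M: "\<forall>m\<ge>M. h2_norm (\<lambda>n. vec (X m) n - L n) \<le> r/2" using main[of "r/2"] r by auto
    show "\<exists>no. \<forall>n\<ge>no. norm (X n - mk L) < r"
    proof (intro exI allI impI)
      fix n assume "n \<ge> M"
      hence "h2_norm (\<lambda>k. vec (X n) k - L k) \<le> r/2" using M by blast
      thus "norm (X n - mk L) < r" using r unfolding norm_l2 by (simp add: minus_l2.rep_eq mk_inverse[OF LH])
    qed
  qed
  thus "convergent X" by (rule convergentI)
qed

lemma parallelogram:
  fixes u v :: "'a::real_inner"
  shows "(norm (u - v))\<^sup>2 = 2 * (norm u)\<^sup>2 + 2 * (norm v)\<^sup>2 - 4 * (norm ((1/2) *\<^sub>R (u + v)))\<^sup>2"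
  unfolding power2_norm_eq_inner
  by (simp add: inner_add_left inner_add_right inner_diff_left inner_diff_right inner_commute algebra_simps)

lemma infdist_approx:
  fixes S :: "'a::metric_space set"
  assumes "S \<noteq> {}" "e > 0"
  shows "\<exists>y\<in>S. dist a y < infdist a S + e"
proof -
  have "(INF y\<in>S. dist a y) < infdist a S + e" using assms by (simp add: infdist_notempty)
  moreover have "bdd_below ((\<lambda>y. dist a y) ` S)" by (rule bdd_belowI[of _ 0]) auto
  ultimately show ?thesis using cINF_less_iff[OF assms(1)] by blast
qed

lemma proj_exists:
  fixes S :: "'a::{real_inner, complete_space} set"
  assumes cl: "closed S" and sub: "subspace S"
  shows "\<exists>p\<in>S. \<forall>y\<in>S. norm (a - p) \<le> norm (a - y)"
proof -
  define d where "d = infdist a S"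
  have S0: "0 \<in> S" using sub by (simp add: subspace_0)
  hence Sne: "S \<noteq> {}" by blast
  have d0: "d \<ge> 0" unfolding d_def by (rule infdist_nonneg)
  have dle: "d \<le> norm (a - y)" if "y \<in> S" for y
    using infdist_le[OF that, of a] unfolding d_def by (simp add: dist_norm)
  have "\<exists>y\<in>S. (norm (a - y))\<^sup>2 < d\<^sup>2 + 1 / (Suc n)" for n
  proof -
    define e where "e = sqrt (d\<^sup>2 + 1 / Suc n) - d"
    have "d = sqrt (d\<^sup>2)" using d0 by simp
    also have "\<dots> < sqrt (d\<^sup>2 + 1 / Suc n)" by (intro real_sqrt_less_mono) simp
    finally have e0: "e > 0" unfolding e_def by simp
    obtain y where y: "y \<in> S" "dist a y < d + e" using infdist_approx[OF Sne e0, of a] d_def by auto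
    have "norm (a - y) < sqrt (d\<^sup>2 + 1 / Suc n)" using y(2) by (simp add: e_def dist_norm)
    hence "(norm (a - y))\<^sup>2 < (sqrt (d\<^sup>2 + 1 / Suc n))\<^sup>2"
      by (intro power_strict_mono) auto
    hence "(norm (a - y))\<^sup>2 < d\<^sup>2 + 1 / Suc n" by (simp add: add_nonneg_nonneg)
    with y(1) show ?thesis by blast
  qed
  then obtain Y where Y: "\<And>n. Y n \<in> S" "\<And>n. (norm (a - Y n))\<^sup>2 < d\<^sup>2 + 1 / Suc n"
    by metis
  have diffbound: "(norm (Y n - Y m))\<^sup>2 \<le> 2 / Suc n + 2 / Suc m" for n m
  proof -
    have mid: "(1/2) *\<^sub>R (Y n + Y m) \<in> S"
      using sub Y(1) by (intro subspace_scale subspace_add) auto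
    have "d \<le> norm (a - (1/2) *\<^sub>R (Y n + Y m))" by (rule dle[OF mid])
    hence "d\<^sup>2 \<le> (norm (a - (1/2) *\<^sub>R (Y n + Y m)))\<^sup>2" using d0 by (intro power_mono) auto
    moreover have "(1/2) *\<^sub>R ((a - Y n) + (a - Y m)) = a - (1/2) *\<^sub>R (Y n + Y m)"
    proof -
      have half: "(1/2) *\<^sub>R a + (1/2) *\<^sub>R a = a" using scaleR_add_left[of "1/2" "1/2" a] by simp
      have "(1/2) *\<^sub>R ((a - Y n) + (a - Y m)) = ((1/2) *\<^sub>R a + (1/2) *\<^sub>R a) - (1/2) *\<^sub>R (Y n + Y m)"
        by (simp add: algebra_simps)
      also have "\<dots> = a - (1/2) *\<^sub>R (Y n + Y m)" by (simp only: half)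
      finally show ?thesis .
    qed
    moreover have "(a - Y n) - (a - Y m) = Y m - Y n" by simp
    ultimately have "(norm (Y m - Y n))\<^sup>2 \<le> 2 * (norm (a - Y n))\<^sup>2 + 2 * (norm (a - Y m))\<^sup>2 - 4 * d\<^sup>2"
      using parallelogram[of "a - Y n" "a - Y m"] by simp
    also have "\<dots> \<le> 2 / Suc n + 2 / Suc m" using Y(2)[of n] Y(2)[of m] by simp
    finally show ?thesis by (simp add: norm_minus_commute)
  qed
  have "Cauchy Y"
  proof (rule metric_CauchyI)
    fix e :: real assume e: "e > 0"
    obtain N :: nat where N: "4 / e\<^sup>2 < N" using reals_Archimedean2 by blast
    have "\<forall>m\<ge>N. \<forall>n\<ge>N. dist (Y m) (Y n) < e"
    proof (intro allI impI)
      fix m n assume mn: "m \<ge> N" "n \<ge> N"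
      have e2: "e\<^sup>2 > 0" using e by simp
      have "4 / e\<^sup>2 < Suc N" using N by simp
      hence "4 < e\<^sup>2 * Suc N" using e2 by (simp add: field_simps)
      moreover have "e\<^sup>2 * Suc N \<le> e\<^sup>2 * Suc m" "e\<^sup>2 * Suc N \<le> e\<^sup>2 * Suc n"
        using mn e2 by (intro mult_left_mono; simp)+
      ultimately have "4 < e\<^sup>2 * Suc m" "4 < e\<^sup>2 * Suc n" by linarith+
      hence "2 / Suc m < e\<^sup>2 / 2" "2 / Suc n < e\<^sup>2 / 2" by (simp_all add: field_simps)
      hence "(norm (Y m - Y n))\<^sup>2 < e\<^sup>2" using diffbound[of m n] by linarith
      hence "norm (Y m - Y n) < e" using e by (simp add: power_less_imp_less_base)
      thus "dist (Y m) (Y n) < e" by (simp add: dist_norm)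
    qed
    thus "\<exists>N. \<forall>m\<ge>N. \<forall>n\<ge>N. dist (Y m) (Y n) < e" by blast
  qed
  then obtain p where p: "Y \<longlonglongrightarrow> p" using Cauchy_convergent_iff convergent_def by blast
  have pS: "p \<in> S" by (rule closed_sequentially[OF cl Y(1) p])
  have lim: "(\<lambda>n. (norm (a - Y n))\<^sup>2) \<longlonglongrightarrow> (norm (a - p))\<^sup>2"
    by (intro tendsto_intros p)
  have lim2: "(\<lambda>n. d\<^sup>2 + 1 / Suc n) \<longlonglongrightarrow> d\<^sup>2"
    using tendsto_add[OF tendsto_const LIMSEQ_inverse_real_of_nat, of "d\<^sup>2"]
    by (simp add: inverse_eq_divide)
  have "(norm (a - p))\<^sup>2 \<le> d\<^sup>2"
    by (rule LIMSEQ_le[OF lim lim2]) (use Y(2) less_imp_le in blast)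
  hence "norm (a - p) \<le> d" using d0 by (simp add: power2_le_iff_abs_le)
  thus ?thesis using pS dle by (meson order_trans)
qed

lemma proj_orth:
  fixes S :: "'a::{real_inner, complete_space} set"
  assumes cl: "closed S" and sub: "subspace S"
  shows "\<exists>p\<in>S. \<forall>y\<in>S. inner (a - p) y = 0"
proof -
  obtain p where pS: "p \<in> S" and pmin: "\<forall>y\<in>S. norm (a - p) \<le> norm (a - y)"
    using proj_exists[OF cl sub] by blast
  have "inner (a - p) z = 0" if z: "z \<in> S" for z
  proof (cases "z = 0")
    case True thus ?thesis by simp
  next
    case False
    define c where "c = inner (a - p) z"
    define t where "t = c / inner z z"
    have zz: "inner z z > 0" using False by simp
    have "p + t *\<^sub>R z \<in> S" using sub pS z by (intro subspace_add subspace_scale) auto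
    hence le: "(norm (a - p))\<^sup>2 \<le> (norm (a - (p + t *\<^sub>R z)))\<^sup>2"
      using pmin by (intro power_mono) auto
    have "(norm (a - (p + t *\<^sub>R z)))\<^sup>2 = (norm (a - p))\<^sup>2 - 2 * t * c + t\<^sup>2 * inner z z"
      unfolding power2_norm_eq_inner c_def
      by (simp add: inner_add_left inner_add_right inner_diff_left inner_diff_right inner_commute
          algebra_simps power2_eq_square)
    also have "t\<^sup>2 * inner z z = t * c" using zz by (simp add: t_def power2_eq_square)
    finally have "0 \<le> - t * c" using le by (simp add: mult.commute)
    hence "0 \<le> - (c * c) / inner z z" by (simp add: t_def)
    hence "c * c \<le> 0" using zz by (simp add: divide_le_0_iff)
    hence "c = 0" by (auto simp: mult_le_0_iff)
    thus ?thesis by (simp add: c_def)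
  qed
  with pS show ?thesis by blast
qed

lemma stD: assumes "sarason_toeplitz D T" shows
  "D \<subseteq> H2" "(\<lambda>n. 0) \<in> D"
  "\<And>f g. f\<in>D \<Longrightarrow> g\<in>D \<Longrightarrow> (\<lambda>n. f n + g n) \<in> D"
  "\<And>c f. f\<in>D \<Longrightarrow> (\<lambda>n. c * f n) \<in> D"
  "\<And>f. f\<in>D \<Longrightarrow> T f \<in> H2"
  "\<And>f g. f\<in>D \<Longrightarrow> g\<in>D \<Longrightarrow> T (\<lambda>n. f n + g n) = (\<lambda>n. T f n + T g n)"
  "\<And>c f. f\<in>D \<Longrightarrow> T (\<lambda>n. c * f n) = (\<lambda>n. c * T f n)"
  "densely_defined D" "closed_operator D T"
  "\<And>f. f\<in>D \<Longrightarrow> shift f \<in> D"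
  "\<And>f. f\<in>D \<Longrightarrow> backshift (T (shift f)) = T f"
  "\<And>f. f\<in>D \<Longrightarrow> f 0 = 0 \<Longrightarrow> backshift f \<in> D"
  using assms unfolding sarason_toeplitz_def linear_operator_def by blast+

lemma h2_norm_commute: "h2_norm (\<lambda>n. f n - g n) = h2_norm (\<lambda>n. g n - f n)"
  unfolding h2_norm_def by (simp add: norm_minus_commute)

lemma hi_cs: assumes f: "f \<in> H2" and g: "g \<in> H2"
  shows "cmod (h2_inner f g) \<le> h2_norm f * h2_norm g"
proof (cases "h2_inner f g = 0")
  case True thus ?thesis using norm_nonneg[OF f] norm_nonneg[OF g] by simp
next
  case False
  define z where "z = h2_inner f g"
  define u where "u = cnj z / cmod z"
  have u1: "cmod u = 1" using False by (simp add: u_def z_def norm_divide)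
  have uf: "(\<lambda>n. u * f n) \<in> H2" by (rule H2_scale[OF f])
  have "h2_inner (\<lambda>n. u * f n) g = u * z" using hi_scale_left[OF f g] by (simp add: z_def)
  also have "u * z = complex_of_real (cmod z)"
  proof -
    have nz: "cmod z \<noteq> 0" using False by (simp add: z_def)
    have "cnj z * z = complex_of_real ((cmod z)\<^sup>2)" by (subst mult.commute) (rule complex_norm_square[symmetric])
    hence "u * z = complex_of_real ((cmod z)\<^sup>2) / complex_of_real (cmod z)" by (simp add: u_def)
    also have "\<dots> = complex_of_real (cmod z)" using nz by (simp add: power2_eq_square)
    finally show ?thesis .
  qed
  finally have eq: "h2_inner (\<lambda>n. u * f n) g = complex_of_real (cmod z)" .
  have "cmod z = inner (mk (\<lambda>n. u * f n)) (mk g)"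
    unfolding inner_l2 using eq by (simp add: mk_inverse[OF uf] mk_inverse[OF g])
  also have "\<dots> \<le> norm (mk (\<lambda>n. u * f n)) * norm (mk g)" by (rule norm_cauchy_schwarz)
  also have "norm (mk (\<lambda>n. u * f n)) = h2_norm f"
    unfolding norm_l2 mk_inverse[OF uf] h2_norm_def using u1 by (simp add: norm_mult)
  also have "norm (mk g) = h2_norm g" unfolding norm_l2 mk_inverse[OF g] ..
  finally show ?thesis by (simp add: z_def)
qed

lemma hi_tendsto_left:
  assumes fs: "\<And>k. fs k \<in> H2" and f: "f \<in> H2" and g: "g \<in> H2" and t: "h2_tendsto fs f"
  shows "(\<lambda>k. h2_inner (fs k) g) \<longlonglongrightarrow> h2_inner f g"
proof -
  have t0: "(\<lambda>k. h2_norm (\<lambda>n. fs k n - f n) * h2_norm g) \<longlonglongrightarrow> 0"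
    using tendsto_mult_left_zero[OF t[unfolded h2_tendsto_def]] by simp
  have "(\<lambda>k. h2_inner (fs k) g - h2_inner f g) \<longlonglongrightarrow> 0"
  proof (rule Lim_null_comparison[OF _ t0])
    show "\<forall>\<^sub>F k in sequentially. norm (h2_inner (fs k) g - h2_inner f g) \<le> h2_norm (\<lambda>n. fs k n - f n) * h2_norm g"
      using hi_cs[OF H2_diff[OF fs f] g] hi_diff_left[OF fs f g] by simp
  qed
  thus ?thesis by (simp add: LIM_zero_iff)
qed

lemma hi_tendsto_right:
  assumes fs: "\<And>k. fs k \<in> H2" and f: "f \<in> H2" and g: "g \<in> H2" and t: "h2_tendsto fs f"
  shows "(\<lambda>k. h2_inner g (fs k)) \<longlonglongrightarrow> h2_inner g f"
proof -
  have "(\<lambda>k. cnj (h2_inner (fs k) g)) \<longlonglongrightarrow> cnj (h2_inner f g)"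
    by (intro tendsto_cnj hi_tendsto_left[OF fs f g t])
  thus ?thesis using hi_commute[OF g f] hi_commute[OF g fs] by simp
qed

lemma orth_zero:
  assumes dense: "densely_defined D" and DH: "D \<subseteq> H2" and h: "h \<in> H2"
    and orth: "\<forall>f\<in>D. h2_inner f h = 0"
  shows "h = (\<lambda>n. 0)"
proof -
  have "\<exists>g\<in>D. h2_norm (\<lambda>n. h n - g n) < 1 / Suc k" for k
    using dense h unfolding densely_defined_def by simp
  then obtain G where G: "\<And>k. G k \<in> D" "\<And>k. h2_norm (\<lambda>n. h n - G k n) < 1 / Suc k" by metis
  have GH: "G k \<in> H2" for k using G(1) DH by blast
  have "h2_tendsto G h"
    unfolding h2_tendsto_def
  proof (rule Lim_null_comparison[OF _ LIMSEQ_inverse_real_of_nat])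
    show "\<forall>\<^sub>F k in sequentially. norm (h2_norm (\<lambda>n. G k n - h n)) \<le> inverse (real (Suc k))"
      using G(2) norm_nonneg[OF H2_diff[OF GH h]] h2_norm_commute
      by (auto simp: inverse_eq_divide less_imp_le)
  qed
  hence "(\<lambda>k. h2_inner (G k) h) \<longlonglongrightarrow> h2_inner h h" by (rule hi_tendsto_left[OF GH h h])
  moreover have "(\<lambda>k. h2_inner (G k) h) = (\<lambda>k. 0)" using orth G(1) by simp
  ultimately have "h2_inner h h = 0" using LIMSEQ_unique tendsto_const by metis
  hence "h2_norm h = 0" using hi_self[OF h] by simp
  thus ?thesis using norm_zero_iff[OF h] by simp
qed

lemma adj_unique:
  assumes ST: "sarason_toeplitz D T" and h1: "h1 \<in> H2" and h2: "h2 \<in> H2"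
    and e1: "\<forall>f\<in>D. h2_inner (T f) g = h2_inner f h1"
    and e2: "\<forall>f\<in>D. h2_inner (T f) g = h2_inner f h2"
  shows "h1 = h2"
proof -
  have "\<forall>f\<in>D. h2_inner f (\<lambda>n. h1 n - h2 n) = 0"
    using e1 e2 hi_diff_right[OF h1 h2] stD(1)[OF ST] by auto
  hence "(\<lambda>n. h1 n - h2 n) = (\<lambda>n. 0)"
    by (rule orth_zero[OF stD(8)[OF ST] stD(1)[OF ST] H2_diff[OF h1 h2]])
  thus ?thesis by (simp add: fun_eq_iff)
qed

lemma adj_eq:
  assumes ST: "sarason_toeplitz D T" and g: "g \<in> H2" and h: "h \<in> H2"
    and e: "\<forall>f\<in>D. h2_inner (T f) g = h2_inner f h"
  shows "g \<in> adj_dom D T" "adj D T g = h"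
proof -
  show "g \<in> adj_dom D T" using g h e unfolding adj_dom_def by blast
  show "adj D T g = h" unfolding adj_def
  proof (rule the_equality)
    show "h \<in> H2 \<and> (\<forall>f\<in>D. h2_inner (T f) g = h2_inner f h)" using h e by blast
    fix h' assume a: "h' \<in> H2 \<and> (\<forall>f\<in>D. h2_inner (T f) g = h2_inner f h')"
    show "h' = h" using adj_unique[OF ST conjunct1[OF a] h conjunct2[OF a] e] .
  qed
qed

lemma adj_char:
  assumes ST: "sarason_toeplitz D T" and g: "g \<in> adj_dom D T"
  shows "g \<in> H2" "adj D T g \<in> H2" "\<forall>f\<in>D. h2_inner (T f) g = h2_inner f (adj D T g)"
proof -
  show gH: "g \<in> H2" using g by (simp add: adj_dom_def)
  obtain h where h: "h \<in> H2" "\<forall>f\<in>D. h2_inner (T f) g = h2_inner f h"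
    using g unfolding adj_dom_def by blast
  have "adj D T g = h" using adj_eq(2)[OF ST gH h] .
  thus "adj D T g \<in> H2" "\<forall>f\<in>D. h2_inner (T f) g = h2_inner f (adj D T g)" using h by auto
qed

lemma T_zero: assumes ST: "sarason_toeplitz D T" shows "T (\<lambda>n. 0) = (\<lambda>n. 0)"
  using stD(7)[OF ST stD(2)[OF ST], of 0] by simp

lemma hi_uminus_right: "f \<in> H2 \<Longrightarrow> g \<in> H2 \<Longrightarrow> h2_inner f (\<lambda>n. - g n) = - h2_inner f g"
  using hi_scale_right[of f g "-1"] by simp

lemma hi_uminus_left: "f \<in> H2 \<Longrightarrow> g \<in> H2 \<Longrightarrow> h2_inner (\<lambda>n. - f n) g = - h2_inner f g"
  using hi_scale_left[of f g "-1"] by simp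

lemma cplx_zero: "Re z = 0 \<Longrightarrow> Re (\<i> * z) = 0 \<Longrightarrow> z = 0"
  by (simp add: complex_eq_iff)


lemma adj_linear:
  assumes ST: "sarason_toeplitz D T"
  shows "linear_operator (adj_dom D T) (adj D T)"
proof -
  note DH = stD(1)[OF ST] and TH = stD(5)[OF ST]
  have sub: "adj_dom D T \<subseteq> H2" by (auto simp: adj_dom_def)
  have zero: "(\<lambda>n. 0) \<in> adj_dom D T"
    using adj_eq(1)[OF ST H2_zero H2_zero] by simp
  have add: "(\<lambda>n. g1 n + g2 n) \<in> adj_dom D T \<and> adj D T (\<lambda>n. g1 n + g2 n) = (\<lambda>n. adj D T g1 n + adj D T g2 n)"
    if g1: "g1 \<in> adj_dom D T" and g2: "g2 \<in> adj_dom D T" for g1 g2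
  proof -
    note c1 = adj_char[OF ST g1] and c2 = adj_char[OF ST g2]
    have "\<forall>f\<in>D. h2_inner (T f) (\<lambda>n. g1 n + g2 n) = h2_inner f (\<lambda>n. adj D T g1 n + adj D T g2 n)"
    proof
      fix f assume f: "f \<in> D"
      have fH: "f \<in> H2" using f DH by blast
      show "h2_inner (T f) (\<lambda>n. g1 n + g2 n) = h2_inner f (\<lambda>n. adj D T g1 n + adj D T g2 n)"
        using hi_add_right[OF c1(1) c2(1) TH[OF f]] hi_add_right[OF c1(2) c2(2) fH] c1(3) c2(3) f by simp
    qed
    thus ?thesis using adj_eq[OF ST H2_add[OF c1(1) c2(1)] H2_add[OF c1(2) c2(2)]] by blast
  qed
  have scale: "(\<lambda>n. c * g n) \<in> adj_dom D T \<and> adj D T (\<lambda>n. c * g n) = (\<lambda>n. c * adj D T g n)"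
    if g: "g \<in> adj_dom D T" for g c
  proof -
    note c1 = adj_char[OF ST g]
    have "\<forall>f\<in>D. h2_inner (T f) (\<lambda>n. c * g n) = h2_inner f (\<lambda>n. c * adj D T g n)"
    proof
      fix f assume f: "f \<in> D"
      have fH: "f \<in> H2" using f DH by blast
      show "h2_inner (T f) (\<lambda>n. c * g n) = h2_inner f (\<lambda>n. c * adj D T g n)"
        using hi_scale_right[OF TH[OF f] c1(1)] hi_scale_right[OF fH c1(2)] c1(3) f by simp
    qed
    thus ?thesis using adj_eq[OF ST H2_scale[OF c1(1)] H2_scale[OF c1(2)]] by blast
  qed
  show ?thesis unfolding linear_operator_def
    using sub zero add scale adj_char(2)[OF ST] by blast
qed

lemma adj_closed:
  assumes ST: "sarason_toeplitz D T"
  shows "closed_operator (adj_dom D T) (adj D T)"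
  unfolding closed_operator_def
proof (intro allI impI conjI)
  fix gs g h
  assume gs: "\<forall>k. gs k \<in> adj_dom D T" and g: "g \<in> H2" and h: "h \<in> H2"
    and tg: "h2_tendsto gs g" and th: "h2_tendsto (\<lambda>k. adj D T (gs k)) h"
  note DH = stD(1)[OF ST] and TH = stD(5)[OF ST]
  have e: "\<forall>f\<in>D. h2_inner (T f) g = h2_inner f h"
  proof
    fix f assume f: "f \<in> D"
    have l1: "(\<lambda>k. h2_inner (T f) (gs k)) \<longlonglongrightarrow> h2_inner (T f) g"
      using hi_tendsto_right[OF _ g TH[OF f] tg] adj_char(1)[OF ST] gs by blast
    have l2: "(\<lambda>k. h2_inner f (adj D T (gs k))) \<longlonglongrightarrow> h2_inner f h"
      using hi_tendsto_right[OF _ h _ th] adj_char(2)[OF ST] gs f DH by blast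
    have eq: "(\<lambda>k. h2_inner (T f) (gs k)) = (\<lambda>k. h2_inner f (adj D T (gs k)))"
      using adj_char(3)[OF ST] gs f by blast
    have "(\<lambda>k. h2_inner f (adj D T (gs k))) \<longlonglongrightarrow> h2_inner (T f) g" using l1 unfolding eq .
    thus "h2_inner (T f) g = h2_inner f h" using l2 by (rule LIMSEQ_unique)
  qed
  show "g \<in> adj_dom D T" by (rule adj_eq(1)[OF ST g h e])
  show "adj D T g = h" by (rule adj_eq(2)[OF ST g h e])
qed

lemma exists_f0:
  assumes ST: "sarason_toeplitz D T"
  shows "\<exists>f0\<in>D. f0 0 = 1"
proof -
  define e0 :: h2 where "e0 = (\<lambda>n. if n = 0 then 1 else 0)"
  have e0H: "e0 \<in> H2" unfolding e0_def by (rule H2_e0)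
  obtain g where g: "g \<in> D" "h2_norm (\<lambda>n. e0 n - g n) < 1"
    using stD(8)[OF ST] e0H unfolding densely_defined_def by (meson zero_less_one)
  have gH: "g \<in> H2" using g(1) stD(1)[OF ST] by blast
  have "cmod (e0 0 - g 0) \<le> h2_norm (\<lambda>n. e0 n - g n)"
    using coord_le[OF H2_diff[OF e0H gH], of 0] by simp
  hence "cmod (1 - g 0) < 1" using g(2) by (simp add: e0_def)
  hence g0: "g 0 \<noteq> 0" by auto
  have "(\<lambda>n. (1 / g 0) * g n) \<in> D" by (rule stD(4)[OF ST g(1)])
  moreover have "(1 / g 0) * g 0 = 1" using g0 by simp
  ultimately show ?thesis by (intro bexI[where x="\<lambda>n. (1 / g 0) * g n"]) auto
qed

lemma hi_backshift_both:
  assumes u: "u \<in> H2" and g: "g \<in> H2" and g0: "g 0 = 0"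
  shows "h2_inner u g = h2_inner (backshift u) (backshift g)"
proof -
  have s: "summable (\<lambda>n. u n * cnj (g n))" by (rule summable_inner[OF u g])
  have "h2_inner u g = (\<Sum>n. u (Suc n) * cnj (g (Suc n))) + u 0 * cnj (g 0)"
    unfolding h2_inner_def using suminf_split_head[OF s] s by (simp add: suminf_split_initial_segment)
  thus ?thesis using g0 by (simp add: backshift_def h2_inner_def)
qed

lemma adj_backshift:
  assumes ST: "sarason_toeplitz D T" and g: "g \<in> adj_dom D T" and g0: "g 0 = 0"
  shows "backshift g \<in> adj_dom D T"
proof -
  note DH = stD(1)[OF ST] and TH = stD(5)[OF ST]
  note c = adj_char[OF ST g]
  have "\<forall>f\<in>D. h2_inner (T f) (backshift g) = h2_inner f (backshift (adj D T g))"
  proof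
    fix f assume f: "f \<in> D"
    have sf: "shift f \<in> D" by (rule stD(10)[OF ST f])
    have "h2_inner (T f) (backshift g) = h2_inner (backshift (T (shift f))) (backshift g)"
      using stD(11)[OF ST f] by simp
    also have "\<dots> = h2_inner (T (shift f)) g"
      using hi_backshift_both[OF TH[OF sf] c(1) g0] by simp
    also have "\<dots> = h2_inner (shift f) (adj D T g)" using c(3) sf by blast
    also have "\<dots> = h2_inner f (backshift (adj D T g))"
      by (rule hi_shift_left[OF subsetD[OF DH f] c(2)])
    finally show "h2_inner (T f) (backshift g) = h2_inner f (backshift (adj D T g))" .
  qed
  thus ?thesis using adj_eq(1)[OF ST H2_backshift[OF c(1)] H2_backshift[OF c(2)]] by blast
qed

lemma adj_shift:
  assumes ST: "sarason_toeplitz D T" and g: "g \<in> adj_dom D T"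
  shows "shift g \<in> adj_dom D T \<and> backshift (adj D T (shift g)) = adj D T g"
proof -
  note DH = stD(1)[OF ST] and TH = stD(5)[OF ST]
  note c = adj_char[OF ST g]
  define h where "h = adj D T g"
  have hH: "h \<in> H2" using c(2) by (simp add: h_def)
  have gH: "g \<in> H2" using c(1) .
  obtain f0 where f0: "f0 \<in> D" "f0 0 = 1" using exists_f0[OF ST] by blast
  have f0H: "f0 \<in> H2" using f0 DH by blast
  define cc where "cc = h2_inner (T f0) (shift g) - h2_inner f0 (shift h)"
  define h' where "h' = (\<lambda>n. shift h n + (if n = 0 then cnj cc else 0))"
  have h'H: "h' \<in> H2" unfolding h'_def by (rule H2_add[OF H2_shift[OF hH] H2_e0])
  have key: "h2_inner (T f) (shift g) = h2_inner f h'" if f: "f \<in> D" for f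
  proof -
    have fH: "f \<in> H2" using f DH by blast
    define r where "r = (\<lambda>n. f n + - f 0 * f0 n)"
    have rD: "r \<in> D" unfolding r_def by (rule stD(3)[OF ST f stD(4)[OF ST f0(1)]])
    have r0: "r 0 = 0" using f0(2) by (simp add: r_def)
    define f1 where "f1 = backshift r"
    have f1D: "f1 \<in> D" unfolding f1_def by (rule stD(12)[OF ST rD r0])
    have f1H: "f1 \<in> H2" using f1D DH by blast
    have sf1: "shift f1 = r" using r0 by (auto simp: fun_eq_iff f1_def shift_def backshift_def split: nat.splits)
    have rH: "r \<in> H2" using rD DH by blast
    have f0sD: "(\<lambda>n. f 0 * f0 n) \<in> D" by (rule stD(4)[OF ST f0(1)])
    have fdec: "f = (\<lambda>n. r n + f 0 * f0 n)" by (simp add: r_def)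
    have Tf: "T f = (\<lambda>n. T r n + f 0 * T f0 n)"
    proof -
      have "T f = T (\<lambda>n. r n + f 0 * f0 n)" by (simp add: r_def)
      also have "\<dots> = (\<lambda>n. T r n + T (\<lambda>n. f 0 * f0 n) n)" by (rule stD(6)[OF ST rD f0sD])
      also have "\<dots> = (\<lambda>n. T r n + f 0 * T f0 n)" by (simp add: stD(7)[OF ST f0(1)])
      finally show ?thesis .
    qed
    have "h2_inner (T r) (shift g) = h2_inner (backshift (T (shift f1))) g"
      using hi_shift_right[OF TH[OF rD] gH] sf1 by simp
    also have "\<dots> = h2_inner (T f1) g" using stD(11)[OF ST f1D] by simp
    also have "\<dots> = h2_inner f1 h" using c(3) f1D by (simp add: h_def)
    also have "\<dots> = h2_inner (shift f1) (shift h)"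
      using hi_shift_left[OF f1H H2_shift[OF hH]] by (simp add: backshift_def shift_def)
    also have "\<dots> = h2_inner r (shift h)" using sf1 by simp
    also have "\<dots> = h2_inner f (shift h) - f 0 * h2_inner f0 (shift h)"
      unfolding r_def using hi_add_left[OF fH H2_scale[OF f0H] H2_shift[OF hH], of "- f 0"]
        hi_scale_left[OF f0H H2_shift[OF hH], of "- f 0"] by simp
    finally have e1: "h2_inner (T r) (shift g) = h2_inner f (shift h) - f 0 * h2_inner f0 (shift h)" .
    have "h2_inner (T f) (shift g) = h2_inner (T r) (shift g) + f 0 * h2_inner (T f0) (shift g)"
      unfolding Tf using hi_add_left[OF TH[OF rD] H2_scale[OF TH[OF f0(1)]] H2_shift[OF gH], of "f 0"]
        hi_scale_left[OF TH[OF f0(1)] H2_shift[OF gH], of "f 0"] by simp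
    also have "\<dots> = h2_inner f (shift h) + f 0 * cc" unfolding e1 cc_def by (simp add: algebra_simps)
    also have "\<dots> = h2_inner f h'"
      unfolding h'_def using hi_add_right[OF H2_shift[OF hH] H2_e0 fH, of "cnj cc"] hi_e0_right[OF fH, of "cnj cc"]
      by simp
    finally show ?thesis .
  qed
  have sg: "shift g \<in> adj_dom D T" and A: "adj D T (shift g) = h'"
    using adj_eq[OF ST H2_shift[OF gH] h'H] key by blast+
  have "backshift h' = h" by (simp add: h'_def fun_eq_iff backshift_def shift_def)
  thus ?thesis using sg A by (simp add: h_def)
qed

lemma vec_mk: "f \<in> H2 \<Longrightarrow> vec (mk f) = f" by (rule mk_inverse)

lemma mk_add: assumes "f \<in> H2" "g \<in> H2" shows "mk f + mk g = mk (\<lambda>n. f n + g n)"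
  by (rule vec_inject[THEN iffD1]) (simp add: plus_l2.rep_eq vec_mk assms H2_add)

lemma mk_diff: assumes "f \<in> H2" "g \<in> H2" shows "mk f - mk g = mk (\<lambda>n. f n - g n)"
  by (rule vec_inject[THEN iffD1]) (simp add: minus_l2.rep_eq vec_mk assms H2_diff)

lemma mk_scale: assumes "f \<in> H2" shows "c *\<^sub>R mk f = mk (\<lambda>n. complex_of_real c * f n)"
  by (rule vec_inject[THEN iffD1]) (simp add: scaleR_l2.rep_eq vec_mk assms H2_scale)

lemma mk_zero: "mk (\<lambda>n. 0) = 0"
  by (subst zero_l2.rep_eq[symmetric]) (rule vec_inverse)

lemma l2_tendsto: "(X \<longlonglongrightarrow> x) \<longleftrightarrow> h2_tendsto (\<lambda>k. vec (X k)) (vec x)"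
  unfolding h2_tendsto_def
  by (subst tendsto_dist_iff) (simp only: dist_l2_def norm_l2 minus_l2.rep_eq)

lemma subspace_closure_rnv:
  fixes S :: "'a::real_normed_vector set"
  assumes S: "subspace S" shows "subspace (closure S)"
  unfolding subspace_def
proof (intro conjI ballI allI)
  have "0 \<in> S" by (rule subspace_0[OF S])
  thus "0 \<in> closure S" by (rule subsetD[OF closure_subset])
  fix x y assume x: "x \<in> closure S" and y: "y \<in> closure S"
  from x obtain X where X: "\<forall>n. X n \<in> S" "X \<longlonglongrightarrow> x" unfolding closure_sequential by blast
  from y obtain Y where Y: "\<forall>n. Y n \<in> S" "Y \<longlonglongrightarrow> y" unfolding closure_sequential by blast
  have "\<forall>n. X n + Y n \<in> S"
  proof
    fix n show "X n + Y n \<in> S" by (rule subspace_add[OF S]) (use X Y in simp_all)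
  qed
  moreover have "(\<lambda>n. X n + Y n) \<longlonglongrightarrow> x + y" by (rule tendsto_add[OF X(2) Y(2)])
  ultimately show "x + y \<in> closure S" unfolding closure_sequential by (intro exI[of _ "\<lambda>n. X n + Y n"] conjI)
next
  fix c :: real and x assume x: "x \<in> closure S"
  from x obtain X where X: "\<forall>n. X n \<in> S" "X \<longlonglongrightarrow> x" unfolding closure_sequential by blast
  have "\<forall>n. c *\<^sub>R X n \<in> S"
  proof
    fix n show "c *\<^sub>R X n \<in> S" by (rule subspace_scale[OF S]) (use X in simp)
  qed
  moreover have "(\<lambda>n. c *\<^sub>R X n) \<longlonglongrightarrow> c *\<^sub>R x" by (rule tendsto_scaleR[OF tendsto_const X(2)])
  ultimately show "c *\<^sub>R x \<in> closure S" unfolding closure_sequential by (intro exI[of _ "\<lambda>n. c *\<^sub>R X n"] conjI)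
qed

lemma adj_dense:
  assumes ST: "sarason_toeplitz D T"
  shows "densely_defined (adj_dom D T)"
proof (rule ccontr)
  define D' where "D' = adj_dom D T"
  note DH = stD(1)[OF ST] and TH = stD(5)[OF ST]
  have LO: "linear_operator D' (adj D T)" unfolding D'_def by (rule adj_linear[OF ST])
  have D'H: "D' \<subseteq> H2" and D'add: "\<And>f g. f\<in>D' \<Longrightarrow> g\<in>D' \<Longrightarrow> (\<lambda>n. f n + g n) \<in> D'"
    and D'scale: "\<And>c f. f\<in>D' \<Longrightarrow> (\<lambda>n. c * f n) \<in> D'" and D'0: "(\<lambda>n. 0) \<in> D'"
    using LO unfolding linear_operator_def by blast+
  assume "\<not> densely_defined (adj_dom D T)"
  hence "\<not> (\<forall>f\<in>H2. \<forall>e>0. \<exists>g\<in>D'. h2_norm (\<lambda>n. f n - g n) < e)"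
    unfolding densely_defined_def D'_def .
  then obtain u e where uH: "u \<in> H2" and e: "e > 0" and far0: "\<not> (\<exists>g\<in>D'. h2_norm (\<lambda>n. u n - g n) < e)"
    by blast
  have far: "\<forall>g\<in>D'. e \<le> h2_norm (\<lambda>n. u n - g n)" using far0 by (simp add: not_less)
  define S1 where "S1 = closure (mk ` D')"
  have sub0: "subspace (mk ` D')"
    unfolding subspace_def
  proof (intro conjI ballI allI)
    show "0 \<in> mk ` D'" by (rule image_eqI[where f=mk, OF mk_zero[symmetric] D'0])
    fix x y assume "x \<in> mk ` D'" "y \<in> mk ` D'"
    then obtain f g where fg: "f \<in> D'" "g \<in> D'" "x = mk f" "y = mk g" by blast
    have "x + y = mk (\<lambda>n. f n + g n)" using fg D'H mk_add by blast
    thus "x + y \<in> mk ` D'" using D'add[OF fg(1,2)] by blast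
  next
    fix c :: real and x assume "x \<in> mk ` D'"
    then obtain f where f: "f \<in> D'" "x = mk f" by blast
    have "c *\<^sub>R x = mk (\<lambda>n. complex_of_real c * f n)" using f D'H mk_scale by blast
    thus "c *\<^sub>R x \<in> mk ` D'" using D'scale[OF f(1)] by blast
  qed
  obtain p where pS: "p \<in> S1" and porth: "\<forall>y\<in>S1. inner (mk u - p) y = 0"
    using proj_orth[OF _ subspace_closure_rnv[OF sub0], of "mk u"] unfolding S1_def by auto
  define w where "w = vec (mk u - p)"
  have wH: "w \<in> H2" unfolding w_def by (rule vec)
  have w0: "w \<noteq> (\<lambda>n. 0)"
  proof
    assume "w = (\<lambda>n. 0)"
    hence "vec (mk u - p) = (\<lambda>n. 0)" unfolding w_def .
    hence "mk (vec (mk u - p)) = 0" using mk_zero by simp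
    hence "mk u - p = 0" by (simp add: vec_inverse)
    hence "mk u \<in> S1" using pS by simp
    then obtain y where y: "y \<in> mk ` D'" "dist y (mk u) < e"
      unfolding S1_def closure_approachable using e by blast
    then obtain g where g: "g \<in> D'" "y = mk g" by blast
    have gH: "g \<in> H2" using g D'H by blast
    have "dist y (mk u) = h2_norm (\<lambda>n. g n - u n)"
      unfolding g(2) dist_l2_def norm_l2 mk_diff[OF gH uH] vec_mk[OF H2_diff[OF gH uH]] ..
    also have "\<dots> = h2_norm (\<lambda>n. u n - g n)" by (rule h2_norm_commute)
    finally show False using y(2) far g(1) by auto
  qed
  have orthw: "h2_inner g w = 0" if g: "g \<in> D'" for g
  proof -
    have gH: "g \<in> H2" using g D'H by blast
    have igD: "(\<lambda>n. \<i> * g n) \<in> D'" by (rule D'scale[OF g])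
    have igH: "(\<lambda>n. \<i> * g n) \<in> H2" by (rule H2_scale[OF gH])
    have "mk g \<in> S1" unfolding S1_def by (rule subsetD[OF closure_subset imageI[OF g]])
    moreover have "mk (\<lambda>n. \<i> * g n) \<in> S1" unfolding S1_def by (rule subsetD[OF closure_subset imageI[OF igD]])
    ultimately
    have "inner (mk u - p) (mk g) = 0" "inner (mk u - p) (mk (\<lambda>n. \<i> * g n)) = 0" using porth by blast+
    hence "Re (h2_inner w g) = 0" "Re (h2_inner w (\<lambda>n. \<i> * g n)) = 0"
      unfolding inner_l2 w_def vec_mk[OF gH] vec_mk[OF igH] by simp_all
    hence "Re (h2_inner w g) = 0" "Im (h2_inner w g) = 0"
      using hi_scale_right[OF wH gH, of \<i>] by simp_all
    hence "h2_inner w g = 0" by (simp add: complex_eq_iff)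
    thus ?thesis using hi_commute[OF wH gH] by simp
  qed
  define Gr where "Gr = (\<lambda>f. (mk f, mk (T f))) ` D"
  have subG: "subspace Gr"
    unfolding subspace_def
  proof (intro conjI ballI allI)
    have "(0::l2 \<times> l2) = (mk (\<lambda>n. 0), mk (T (\<lambda>n. 0)))"
      unfolding zero_prod_def T_zero[OF ST] mk_zero ..
    thus "0 \<in> Gr" unfolding Gr_def using stD(2)[OF ST] by blast
    fix x y assume "x \<in> Gr" "y \<in> Gr"
    then obtain f g where fg: "f \<in> D" "g \<in> D" "x = (mk f, mk (T f))" "y = (mk g, mk (T g))"
      unfolding Gr_def by blast
    have fH: "f \<in> H2" and gH: "g \<in> H2" using fg DH by blast+
    have "x + y = (mk (\<lambda>n. f n + g n), mk (T (\<lambda>n. f n + g n)))"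
      using fg(3,4) mk_add[OF fH gH] mk_add[OF TH[OF fg(1)] TH[OF fg(2)]] stD(6)[OF ST fg(1,2)] by simp
    thus "x + y \<in> Gr" unfolding Gr_def using stD(3)[OF ST fg(1,2)] by blast
  next
    fix c :: real and x assume "x \<in> Gr"
    then obtain f where f: "f \<in> D" "x = (mk f, mk (T f))" unfolding Gr_def by blast
    have fH: "f \<in> H2" using f DH by blast
    have "c *\<^sub>R x = (mk (\<lambda>n. complex_of_real c * f n), mk (T (\<lambda>n. complex_of_real c * f n)))"
      using f(2) mk_scale[OF fH] mk_scale[OF TH[OF f(1)]] stD(7)[OF ST f(1)] by simp
    thus "c *\<^sub>R x \<in> Gr" unfolding Gr_def using stD(4)[OF ST f(1)] by blast
  qed
  have clG: "closed Gr"
    unfolding closed_sequential_limits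
  proof (intro allI impI, elim conjE)
    fix x l assume xG: "\<forall>n. x n \<in> Gr" and xl: "x \<longlonglongrightarrow> l"
    have "\<forall>n. \<exists>f. f \<in> D \<and> x n = (mk f, mk (T f))" using xG unfolding Gr_def by blast
    hence "\<exists>fs. \<forall>n. fs n \<in> D \<and> x n = (mk (fs n), mk (T (fs n)))" by (rule choice)
    then obtain fs where fs0: "\<forall>n. fs n \<in> D \<and> x n = (mk (fs n), mk (T (fs n)))" by (elim exE)
    have fs: "\<And>n. fs n \<in> D" "\<And>n. x n = (mk (fs n), mk (T (fs n)))" using fs0 by simp_all
    have fsH: "\<And>n. fs n \<in> H2" using fs(1) DH by blast
    have t1: "(\<lambda>n. mk (fs n)) \<longlonglongrightarrow> fst l" using tendsto_fst[OF xl] fs(2) by simp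
    have t2: "(\<lambda>n. mk (T (fs n))) \<longlonglongrightarrow> snd l" using tendsto_snd[OF xl] fs(2) by simp
    have h1: "h2_tendsto fs (vec (fst l))" using t1 unfolding l2_tendsto vec_mk[OF fsH] .
    have h2: "h2_tendsto (\<lambda>k. T (fs k)) (vec (snd l))" using t2 unfolding l2_tendsto vec_mk[OF TH[OF fs(1)]] .
    have co: "\<And>fs f g. (\<forall>k. fs k \<in> D) \<Longrightarrow> f \<in> H2 \<Longrightarrow> g \<in> H2 \<Longrightarrow> h2_tendsto fs f \<Longrightarrow>
        h2_tendsto (\<lambda>k. T (fs k)) g \<Longrightarrow> f \<in> D \<and> T f = g"
      using stD(9)[OF ST] unfolding closed_operator_def by blast
    have "\<forall>k. fs k \<in> D" using fs(1) by simp
    from co[OF this vec vec h1 h2] have "vec (fst l) \<in> D \<and> T (vec (fst l)) = vec (snd l)" .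
    hence "l = (mk (vec (fst l)), mk (T (vec (fst l))))" by (simp add: vec_inverse)
    thus "l \<in> Gr" unfolding Gr_def using \<open>vec (fst l) \<in> D \<and> _\<close> by blast
  qed
  obtain q0 where q0G: "q0 \<in> Gr" and qorth: "\<forall>y\<in>Gr. inner ((0, mk w) - q0) y = 0"
    using proj_orth[OF clG subG, of "(0, mk w)"] by blast
  obtain a0 where a0: "a0 \<in> D" "q0 = (mk a0, mk (T a0))" using q0G unfolding Gr_def by blast
  have a0H: "a0 \<in> H2" using a0 DH by blast
  define Q where "Q = (\<lambda>n. w n - T a0 n)"
  have QH: "Q \<in> H2" unfolding Q_def by (rule H2_diff[OF wH TH[OF a0(1)]])
  have na0H: "(\<lambda>n. - a0 n) \<in> H2" by (rule H2_uminus[OF a0H])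
  have r: "(0, mk w) - q0 = (mk (\<lambda>n. - a0 n), mk Q)"
  proof -
    have "0 - mk a0 = mk (\<lambda>n. - a0 n)" using mk_diff[OF H2_zero a0H] mk_zero by simp
    moreover have "mk w - mk (T a0) = mk Q" unfolding Q_def by (rule mk_diff[OF wH TH[OF a0(1)]])
    ultimately show ?thesis using a0(2) by (simp add: vec_inverse)
  qed
  have rel: "Re (h2_inner (T f) Q - h2_inner f a0) = 0" if f: "f \<in> D" for f
  proof -
    have fH: "f \<in> H2" using f DH by blast
    have fG: "(mk f, mk (T f)) \<in> Gr" unfolding Gr_def using f by blast
    have "inner ((0, mk w) - q0) (mk f, mk (T f)) = 0" using qorth fG by blast
    hence "inner (mk (\<lambda>n. - a0 n), mk Q) (mk f, mk (T f)) = 0" unfolding r .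
    hence "inner (mk f) (mk (\<lambda>n. - a0 n)) + inner (mk (T f)) (mk Q) = 0"
      by (simp add: inner_commute)
    hence "Re (h2_inner f (\<lambda>n. - a0 n)) + Re (h2_inner (T f) Q) = 0"
      unfolding inner_l2 vec_mk[OF fH] vec_mk[OF na0H] vec_mk[OF TH[OF f]] vec_mk[OF QH] .
    thus ?thesis using hi_uminus_right[OF fH a0H] by simp
  qed
  have Qrel: "\<forall>f\<in>D. h2_inner (T f) Q = h2_inner f a0"
  proof
    fix f assume f: "f \<in> D"
    have fH: "f \<in> H2" using f DH by blast
    have ifD: "(\<lambda>n. \<i> * f n) \<in> D" by (rule stD(4)[OF ST f])
    have "Re (h2_inner (T (\<lambda>n. \<i> * f n)) Q - h2_inner (\<lambda>n. \<i> * f n) a0) = 0" by (rule rel[OF ifD])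
    hence "Re (\<i> * (h2_inner (T f) Q - h2_inner f a0)) = 0"
      using stD(7)[OF ST f, of \<i>] hi_scale_left[OF TH[OF f] QH, of \<i>] hi_scale_left[OF fH a0H, of \<i>]
      by (simp add: right_diff_distrib)
    hence "h2_inner (T f) Q - h2_inner f a0 = 0" using cplx_zero rel[OF f] by blast
    thus "h2_inner (T f) Q = h2_inner f a0" by simp
  qed
  have QD': "Q \<in> D'" unfolding D'_def by (rule adj_eq(1)[OF ST QH a0H Qrel])
  have Qw: "h2_inner Q w = 0" by (rule orthw[OF QD'])
  define rr where "rr = (0, mk w) - q0"
  have "inner rr rr = inner (0, mk w) rr - inner q0 rr" unfolding rr_def by (simp add: inner_diff_left)
  also have "inner q0 rr = 0" using qorth q0G unfolding rr_def by (simp add: inner_commute)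
  also have "inner (0, mk w) rr = Re (h2_inner w Q)" unfolding rr_def r inner_Pair inner_zero_left
    by (simp add: inner_l2 vec_mk[OF wH] vec_mk[OF QH])
  also have "\<dots> = 0" using hi_commute[OF QH wH] Qw by simp
  finally have "rr = 0" by simp
  hence "q0 = (0, mk w)" unfolding rr_def by simp
  hence "mk a0 = 0" "mk (T a0) = mk w" using a0(2) by simp_all
  hence "vec (mk a0) = vec (mk (\<lambda>n. 0))" by (simp add: mk_zero)
  hence "a0 = (\<lambda>n. 0)" by (simp add: vec_mk a0H)
  hence "T a0 = (\<lambda>n. 0)" using T_zero[OF ST] by simp
  moreover have "vec (mk (T a0)) = vec (mk w)" using \<open>mk (T a0) = mk w\<close> by simp
  ultimately have "w = (\<lambda>n. 0)" using vec_mk[OF wH] vec_mk[OF TH[OF a0(1)]] by simp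
  with w0 show False by contradiction
qed

theorem proposition1:
  assumes "sarason_toeplitz D T"
  shows "sarason_toeplitz (adj_dom D T) (adj D T)"
  unfolding sarason_toeplitz_def
  using adj_linear[OF assms] adj_dense[OF assms] adj_closed[OF assms]
    adj_shift[OF assms] adj_backshift[OF assms] by blast

end
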